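(* Let $K$ be a field, $A$ a subring of $K$, and $Z:=\mathrm{Zar}(K|A)$. Then: (1) The ultrafilter topology on $Z$ is finer than the Zariski topology on $Z$. (2) For any subset $S$ of $K$, the set $B_S:=\{V\in Z\mid V\supseteq S\}$ is closed in the ultrafilter topology. In particular, the basic open sets $B_F$ ($F$ a finite subset of $K$) of the Zariski topology are both open and closed in the ultrafilter topology. (3) Let $Z^{\#}$ denote $Z$ endowed with the $\#$-topology, defined as the coarsest topology on $Z$ for which $B_F$ is both open and closed for every finite subset $F$ of $K$. Then $Z^{\#}$ is a Hausdorff topological space. (4) The $\#$-topology on $Z$ is the coarsest topology having as closed sets the closed sets and the quasi-compact open sets of $Z$ with the Zariski topology; i.e., the family $\{B_F \mid F \text{ a finite subset of } K\}\cup\{\bigcap\{Z\setminus B_G\mid G\in\mathcal G\}\mid \mathcal G \text{ a set of finite subsets of } K\}$ is a subbasis for the closed subsets of $Z^{\#}$. (5) $Z$ with the ultrafilter topology is a Hausdorff compact topological space. (6) The ultrafilter topology, the $\#$-topology and the constructible topology on $Z$ coincide.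
   Context: $\mathrm{Zar}(K|A)$ denotes the set of all valuation rings of $K$ containing $A$. For $S\subseteq K$, $B_S:=\{V\in Z\mid V\supseteq S\}$, and $B_x:=B_{\{x\}}$. The Zariski topology on $Z$ is the topology having as a basis of open sets the sets $B_F$, $F$ ranging over the finite subsets of $K$. A filter on a set $X$ is a nonempty collection of subsets of $X$ not containing $\emptyset$, closed under finite intersections and supersets; an ultrafilter is a maximal filter. For $Y\subseteq Z$ nonempty and $\mathscr U$ an ultrafilter on $Y$, $A_{\mathscr U,Y}:=\{x\in K\mid B_x\cap Y\in\mathscr U\}$ (a valuation domain in $Z$). A subset $Y\subseteq Z$ is stable for ultrafilters if $A_{\mathscr U,Y}\in Y$ for all ultrafilters $\mathscr U$ on $Y$; the ultrafilter topology on $Z$ is the topology whose closed sets are exactly the subsets stable for ultrafilters. For a topological space $\mathcal X$, the constructible topology on $\mathcal X$ is the topology having as a basis the Boolean algebra of subsets of $\mathcal X$ generated (under finite unions, finite intersections and complements) by the quasi-compact open subsets of $\mathcal X$; on $Z$ it is taken with respect to the Zariski topology. *)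

theory Defs
  imports "HOL-Analysis.Analysis"
begin

text \<open>The field K is modelled as the type 'a of class field, i.e. K = UNIV.\<close>

definition is_subring :: "'a::field set \<Rightarrow> bool" where
  "is_subring R \<longleftrightarrow> 0 \<in> R \<and> 1 \<in> R \<and>
     (\<forall>x\<in>R. \<forall>y\<in>R. x + y \<in> R \<and> x * y \<in> R \<and> - x \<in> R)"

definition valuation_ring :: "'a::field set \<Rightarrow> bool" where
  "valuation_ring V \<longleftrightarrow> is_subring V \<and> (\<forall>x. x \<noteq> 0 \<longrightarrow> x \<in> V \<or> inverse x \<in> V)"

definition Zar :: "'a::field set \<Rightarrow> 'a set set" where
  "Zar A = {V. valuation_ring V \<and> A \<subseteq> V}"

definition Bset :: "'a::field set \<Rightarrow> 'a set \<Rightarrow> 'a set set" where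
  "Bset A S = {V \<in> Zar A. S \<subseteq> V}"

definition zariski_top :: "'a::field set \<Rightarrow> 'a set topology" where
  "zariski_top A = topology_generated_by {Bset A F | F. finite F}"

definition filter_on :: "'b set \<Rightarrow> 'b set set \<Rightarrow> bool" where
  "filter_on X \<F> \<longleftrightarrow> \<F> \<noteq> {} \<and> (\<forall>S\<in>\<F>. S \<subseteq> X) \<and> {} \<notin> \<F> \<and>
     (\<forall>S\<in>\<F>. \<forall>T\<in>\<F>. S \<inter> T \<in> \<F>) \<and>
     (\<forall>S\<in>\<F>. \<forall>T. S \<subseteq> T \<and> T \<subseteq> X \<longrightarrow> T \<in> \<F>)"

definition ultrafilter_on :: "'b set \<Rightarrow> 'b set set \<Rightarrow> bool" where
  "ultrafilter_on X \<U> \<longleftrightarrow> filter_on X \<U> \<and> (\<forall>\<G>. filter_on X \<G> \<and> \<U> \<subseteq> \<G> \<longrightarrow> \<G> = \<U>)"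

definition A_ultra :: "'a::field set \<Rightarrow> 'a set set set \<Rightarrow> 'a set set \<Rightarrow> 'a set" where
  "A_ultra A \<U> Y = {x. Bset A {x} \<inter> Y \<in> \<U>}"

definition stable_ultra :: "'a::field set \<Rightarrow> 'a set set \<Rightarrow> bool" where
  "stable_ultra A Y \<longleftrightarrow> Y \<subseteq> Zar A \<and> (\<forall>\<U>. ultrafilter_on Y \<U> \<longrightarrow> A_ultra A \<U> Y \<in> Y)"

text \<open>Ultrafilter topology: closed sets are the subsets of Zar A stable for ultrafilters
  (realised as the topology generated by their complements).\<close>
definition ultra_top :: "'a::field set \<Rightarrow> 'a set topology" where
  "ultra_top A = topology_generated_by {Zar A - Y | Y. stable_ultra A Y}"

definition sharp_top :: "'a::field set \<Rightarrow> 'a set topology" where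
  "sharp_top A = topology_generated_by
     ({Bset A F | F. finite F} \<union> {Zar A - Bset A F | F. finite F})"

text \<open>Constructible topology of a topological space: basis = Boolean algebra generated by
  the quasi-compact open sets; equivalently generated by these sets and their complements.\<close>
definition constructible_top :: "'b topology \<Rightarrow> 'b topology" where
  "constructible_top X = topology_generated_by
     ({U. openin X U \<and> compactin X U} \<union> {topspace X - U | U. openin X U \<and> compactin X U})"

end

theory Submission imports Defs begin

lemma filter_top: "filter_on Y U \<Longrightarrow> Y \<in> U"
  unfolding filter_on_def by blast

lemma filter_Int: "filter_on Y U \<Longrightarrow> S \<in> U \<Longrightarrow> T \<in> U \<Longrightarrow> S \<inter> T \<in> U"
  unfolding filter_on_def by blast
lemma filter_sup: "filter_on Y U \<Longrightarrow> S \<in> U \<Longrightarrow> S \<subseteq> T \<Longrightarrow> T \<subseteq> Y \<Longrightarrow> T \<in> U"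
  unfolding filter_on_def by blast
lemma filter_sub: "filter_on Y U \<Longrightarrow> S \<in> U \<Longrightarrow> S \<subseteq> Y"
  unfolding filter_on_def by blast
lemma filter_ne: "filter_on Y U \<Longrightarrow> {} \<notin> U"
  unfolding filter_on_def by blast

lemma ultra_compl:
  assumes u: "ultrafilter_on Y U" and S: "S \<subseteq> Y" and nS: "S \<notin> U"
  shows "Y - S \<in> U"
proof -
  have f: "filter_on Y U" using u unfolding ultrafilter_on_def by blast
  define G where "G = {T. T \<subseteq> Y \<and> (\<exists>W\<in>U. W - S \<subseteq> T)}"
  have ne: "W - S \<noteq> {}" if "W \<in> U" for W
  proof
    assume "W - S = {}"
    hence "W \<subseteq> S" by blast
    thus False using f that S nS unfolding filter_on_def by blast
  qed
  have fG: "filter_on Y G"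
    unfolding filter_on_def
  proof (intro conjI ballI allI impI)
    show "G \<noteq> {}" using filter_top[OF f] unfolding G_def by blast
    show "T \<subseteq> Y" if "T \<in> G" for T using that unfolding G_def by blast
    show "{} \<notin> G" using ne unfolding G_def by blast
    show "T1 \<inter> T2 \<in> G" if t12: "T1 \<in> G" "T2 \<in> G" for T1 T2
    proof -
      obtain W1 W2 where "W1 \<in> U" "W2 \<in> U" "W1 - S \<subseteq> T1" "W2 - S \<subseteq> T2"
        using t12 unfolding G_def by blast
      moreover have "W1 \<inter> W2 \<in> U" using f calculation unfolding filter_on_def by blast
      ultimately show ?thesis using t12 unfolding G_def by blast
    qed
    show "T2 \<in> G" if "T1 \<in> G" "T1 \<subseteq> T2 \<and> T2 \<subseteq> Y" for T1 T2
      using that unfolding G_def by blast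
  qed
  have "U \<subseteq> G"
  proof
    fix T assume "T \<in> U"
    moreover have "T \<subseteq> Y" using f calculation unfolding filter_on_def by blast
    ultimately show "T \<in> G" unfolding G_def by blast
  qed
  hence "G = U" using u fG unfolding ultrafilter_on_def by blast
  moreover have "Y - S \<in> G" using filter_top[OF f] unfolding G_def by blast
  ultimately show ?thesis by simp
qed


lemma chain_union_filter:
  assumes ne: "\<C> \<noteq> {}" and C: "\<And>G. G \<in> \<C> \<Longrightarrow> filter_on Y G"
    and tot: "\<And>X1 X2. X1 \<in> \<C> \<Longrightarrow> X2 \<in> \<C> \<Longrightarrow> X1 \<subseteq> X2 \<or> X2 \<subseteq> X1"
  shows "filter_on Y (\<Union>\<C>)"
  unfolding filter_on_def
proof (intro conjI ballI allI impI)
  obtain G where G: "G \<in> \<C>" using ne by blast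
  then have "Y \<in> G" using C filter_top by blast
  then show "\<Union>\<C> \<noteq> {}" using G by blast
  show "S \<subseteq> Y" if sC: "S \<in> \<Union>\<C>" for S
  proof -
    obtain X where "X \<in> \<C>" "S \<in> X" using sC by blast
    then show ?thesis using C[of X] unfolding filter_on_def by blast
  qed
  show "{} \<notin> \<Union>\<C>"
  proof
    assume "{} \<in> \<Union>\<C>"
    then obtain X where "X \<in> \<C>" "{} \<in> X" by blast
    then show False using C[of X] unfolding filter_on_def by blast
  qed
  show "S \<inter> T \<in> \<Union>\<C>" if st: "S \<in> \<Union>\<C>" "T \<in> \<Union>\<C>" for S T
  proof -
    obtain X1 where x1: "X1 \<in> \<C>" "S \<in> X1" using st by blast
    obtain X2 where x2: "X2 \<in> \<C>" "T \<in> X2" using st by blast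
    show ?thesis
    proof (cases "X1 \<subseteq> X2")
      case True
      then have "S \<inter> T \<in> X2" using x1 x2 C[OF x2(1)] filter_Int by blast
      then show ?thesis using x2 by blast
    next
      case False
      then have "X2 \<subseteq> X1" using tot x1 x2 by blast
      then have "S \<inter> T \<in> X1" using x1 x2 C[OF x1(1)] filter_Int by blast
      then show ?thesis using x1 by blast
    qed
  qed
  show "T \<in> \<Union>\<C>" if st: "S \<in> \<Union>\<C>" "S \<subseteq> T \<and> T \<subseteq> Y" for S T
  proof -
    obtain X where "X \<in> \<C>" "S \<in> X" using st by blast
    moreover have "T \<in> X" using C[OF calculation(1)] calculation(2) st(2) unfolding filter_on_def by blast
    ultimately show ?thesis by blast
  qed
qed

lemma ultra_exists:
  assumes f: "filter_on Y F"
  shows "\<exists>U. ultrafilter_on Y U \<and> F \<subseteq> U"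
proof -
  define \<A> where "\<A> = {G. filter_on Y G \<and> F \<subseteq> G}"
  have "\<exists>M\<in>\<A>. \<forall>X\<in>\<A>. M \<subseteq> X \<longrightarrow> X = M"
  proof (rule subset_Zorn_nonempty)
    show "\<A> \<noteq> {}" using f unfolding \<A>_def by blast
    fix \<C> assume ne: "\<C> \<noteq> {}" and ch: "subset.chain \<A> \<C>"
    have C: "\<C> \<subseteq> \<A>" and tot: "\<And>X Y. X \<in> \<C> \<Longrightarrow> Y \<in> \<C> \<Longrightarrow> X \<subseteq> Y \<or> Y \<subseteq> X"
      using ch unfolding subset.chain_def by blast+
    have "filter_on Y (\<Union>\<C>)"
      by (rule chain_union_filter[OF ne]) (use C tot in \<open>auto simp: \<A>_def\<close>)
    moreover have "F \<subseteq> \<Union>\<C>" using ne C unfolding \<A>_def by blast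
    ultimately show "\<Union>\<C> \<in> \<A>" unfolding \<A>_def by blast
  qed
  then obtain M where M: "M \<in> \<A>" "\<forall>X\<in>\<A>. M \<subseteq> X \<longrightarrow> X = M" by blast
  have "ultrafilter_on Y M" unfolding ultrafilter_on_def
  proof (intro conjI allI impI)
    show "filter_on Y M" using M unfolding \<A>_def by blast
    fix G assume "filter_on Y G \<and> M \<subseteq> G"
    then have "G \<in> \<A>" using M(1) unfolding \<A>_def by blast
    then show "G = M" using M \<open>filter_on Y G \<and> M \<subseteq> G\<close> by blast
  qed
  thus ?thesis using M unfolding \<A>_def by blast
qed


lemma ZarD:
  assumes "V \<in> Zar A"
  shows "0 \<in> V" "1 \<in> V" "A \<subseteq> V"
    "\<And>x y. x \<in> V \<Longrightarrow> y \<in> V \<Longrightarrow> x + y \<in> V"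
    "\<And>x y. x \<in> V \<Longrightarrow> y \<in> V \<Longrightarrow> x * y \<in> V"
    "\<And>x. x \<in> V \<Longrightarrow> - x \<in> V"
    "\<And>x. x \<noteq> 0 \<Longrightarrow> x \<in> V \<or> inverse x \<in> V"
proof -
  have v: "is_subring V" "\<forall>x. x \<noteq> 0 \<longrightarrow> x \<in> V \<or> inverse x \<in> V" "A \<subseteq> V"
    using assms by (simp_all add: Zar_def valuation_ring_def)
  have s: "0 \<in> V" "1 \<in> V" "\<forall>x\<in>V. \<forall>y\<in>V. x + y \<in> V \<and> x * y \<in> V \<and> - x \<in> V"
    using v(1) unfolding is_subring_def by simp_all
  show "0 \<in> V" "1 \<in> V" "A \<subseteq> V" using s v by simp_all
  show "\<And>x y. x \<in> V \<Longrightarrow> y \<in> V \<Longrightarrow> x + y \<in> V" using s by simp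
  show "\<And>x y. x \<in> V \<Longrightarrow> y \<in> V \<Longrightarrow> x * y \<in> V" using s by simp
  show "\<And>x. x \<in> V \<Longrightarrow> - x \<in> V" using s by simp
  show "\<And>x. x \<noteq> 0 \<Longrightarrow> x \<in> V \<or> inverse x \<in> V" using v by simp
qed

lemma Bset_single: "Bset A {x} = {V \<in> Zar A. x \<in> V}"
  unfolding Bset_def by blast

lemma Bset_sub: "Bset A F \<subseteq> Zar A"
  unfolding Bset_def by blast

lemma Bset_empty: "Bset A {} = Zar A"
  unfolding Bset_def by blast

lemma A_ultra_Zar:
  assumes Y: "Y \<subseteq> Zar A" and u: "ultrafilter_on Y U"
  shows "A_ultra A U Y \<in> Zar A"
proof -
  have f: "filter_on Y U" using u unfolding ultrafilter_on_def by blast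
  define P where "P x \<longleftrightarrow> Bset A {x} \<inter> Y \<in> U" for x
  have PA: "A_ultra A U Y = {x. P x}" unfolding A_ultra_def P_def by simp
  have const: "P c" if "\<And>V. V \<in> Zar A \<Longrightarrow> c \<in> V" for c
  proof -
    have "Bset A {c} \<inter> Y = Y" using Y that unfolding Bset_single by blast
    then show ?thesis unfolding P_def using filter_top[OF f] by simp
  qed
  have mono: "P y" if "P x" "\<And>V. V \<in> Zar A \<Longrightarrow> x \<in> V \<Longrightarrow> y \<in> V" for x y
  proof -
    have "Bset A {x} \<inter> Y \<subseteq> Bset A {y} \<inter> Y" using that(2) unfolding Bset_single by blast
    then show ?thesis using that(1) filter_sup[OF f] unfolding P_def by blast
  qed
  have two: "P z" if "P x" "P y" "\<And>V. V \<in> Zar A \<Longrightarrow> x \<in> V \<Longrightarrow> y \<in> V \<Longrightarrow> z \<in> V" for x y z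
  proof -
    have i: "(Bset A {x} \<inter> Y) \<inter> (Bset A {y} \<inter> Y) \<in> U"
      using that(1,2) filter_Int[OF f] unfolding P_def by blast
    have "(Bset A {x} \<inter> Y) \<inter> (Bset A {y} \<inter> Y) \<subseteq> Bset A {z} \<inter> Y"
      using that(3) unfolding Bset_single by blast
    then show ?thesis using i filter_sup[OF f] unfolding P_def by blast
  qed
  have inv: "P x \<or> P (inverse x)" if "x \<noteq> 0" for x
  proof (rule ccontr)
    assume n: "\<not> (P x \<or> P (inverse x))"
    then have "Y - Bset A {x} \<inter> Y \<in> U" using ultra_compl[OF u] unfolding P_def by blast
    moreover have "Y - Bset A {x} \<inter> Y \<subseteq> Bset A {inverse x} \<inter> Y"
      using Y ZarD(7)[of _ A x] that unfolding Bset_single by blast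
    ultimately have "P (inverse x)" using filter_sup[OF f] unfolding P_def by blast
    then show False using n by blast
  qed
  show ?thesis unfolding PA Zar_def valuation_ring_def is_subring_def
  proof (intro CollectI conjI ballI allI impI subsetI)
    show "P 0" by (rule const) (rule ZarD(1))
    show "P 1" by (rule const) (rule ZarD(2))
    show "P a" if "a \<in> A" for a by (rule const) (use ZarD(3) that in blast)
    show "P (x + y)" if "x \<in> {x. P x}" "y \<in> {x. P x}" for x y
      using that two[of x y "x+y"] ZarD(4) by blast
    show "P (x * y)" if "x \<in> {x. P x}" "y \<in> {x. P x}" for x y
      using that two[of x y "x*y"] ZarD(5) by blast
    show "P (- x)" if "x \<in> {x. P x}" for x
      using that mono[of x "-x"] ZarD(6) by blast
    show "x \<in> {x. P x} \<or> inverse x \<in> {x. P x}" if "x \<noteq> 0" for x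
      using inv[OF that] by blast
  qed
qed


lemma A_ultra_B:
  assumes Y: "Y \<subseteq> Zar A" and u: "ultrafilter_on Y U" and F: "finite F"
    and sub: "F \<subseteq> A_ultra A U Y"
  shows "Bset A F \<inter> Y \<in> U"
  using F sub
proof (induction F rule: finite_induct)
  case empty
  have f: "filter_on Y U" using u unfolding ultrafilter_on_def by blast
  have "Bset A {} \<inter> Y = Y" using Y Bset_empty by blast
  then show ?case using filter_top[OF f] by simp
next
  case (insert x F)
  have f: "filter_on Y U" using u unfolding ultrafilter_on_def by blast
  have a: "Bset A F \<inter> Y \<in> U" using insert by blast
  have b: "Bset A {x} \<inter> Y \<in> U" using insert.prems unfolding A_ultra_def by blast
  have "Bset A (insert x F) \<inter> Y = (Bset A {x} \<inter> Y) \<inter> (Bset A F \<inter> Y)"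
    unfolding Bset_def by blast
  then show ?case using filter_Int[OF f b a] by simp
qed

lemma A_ultra_nB:
  assumes Y: "Y \<subseteq> Zar A" and u: "ultrafilter_on Y U"
    and nsub: "\<not> F \<subseteq> A_ultra A U Y"
  shows "(Zar A - Bset A F) \<inter> Y \<in> U"
proof -
  have f: "filter_on Y U" using u unfolding ultrafilter_on_def by blast
  obtain x where x: "x \<in> F" "x \<notin> A_ultra A U Y" using nsub by blast
  then have "Bset A {x} \<inter> Y \<notin> U" unfolding A_ultra_def by blast
  then have c: "Y - Bset A {x} \<inter> Y \<in> U" using ultra_compl[OF u] by blast
  have "Y - Bset A {x} \<inter> Y \<subseteq> (Zar A - Bset A F) \<inter> Y"
    using Y x(1) unfolding Bset_def by blast
  then show ?thesis using filter_sup[OF f c] by blast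
qed

lemma no_ultra_empty: "\<not> ultrafilter_on {} U"
  unfolding ultrafilter_on_def filter_on_def by blast

lemma stable_B: "stable_ultra A (Bset A S)"
  unfolding stable_ultra_def
proof (intro conjI allI impI)
  show "Bset A S \<subseteq> Zar A" by (rule Bset_sub)
  fix U assume u: "ultrafilter_on (Bset A S) U"
  have f: "filter_on (Bset A S) U" using u unfolding ultrafilter_on_def by blast
  have z: "A_ultra A U (Bset A S) \<in> Zar A" by (rule A_ultra_Zar[OF Bset_sub u])
  have "S \<subseteq> A_ultra A U (Bset A S)"
  proof
    fix s assume "s \<in> S"
    then have "Bset A {s} \<inter> Bset A S = Bset A S" unfolding Bset_def by blast
    then show "s \<in> A_ultra A U (Bset A S)" unfolding A_ultra_def using filter_top[OF f] by simp
  qed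
  then show "A_ultra A U (Bset A S) \<in> Bset A S" using z unfolding Bset_def by blast
qed

lemma stable_cB:
  assumes F: "finite F"
  shows "stable_ultra A (Zar A - Bset A F)"
  unfolding stable_ultra_def
proof (intro conjI allI impI)
  show "Zar A - Bset A F \<subseteq> Zar A" by blast
  fix U assume u: "ultrafilter_on (Zar A - Bset A F) U"
  have f: "filter_on (Zar A - Bset A F) U" using u unfolding ultrafilter_on_def by blast
  have z: "A_ultra A U (Zar A - Bset A F) \<in> Zar A" by (rule A_ultra_Zar[OF _ u]) blast
  show "A_ultra A U (Zar A - Bset A F) \<in> Zar A - Bset A F"
  proof (rule ccontr)
    assume "A_ultra A U (Zar A - Bset A F) \<notin> Zar A - Bset A F"
    then have "F \<subseteq> A_ultra A U (Zar A - Bset A F)" using z unfolding Bset_def by blast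
    then have "Bset A F \<inter> (Zar A - Bset A F) \<in> U" using A_ultra_B[OF _ u F] by blast
    then show False using filter_ne[OF f] by simp
  qed
qed

definition SB :: "'a::field set \<Rightarrow> 'a set set set" where
  "SB A = {Bset A F | F. finite F} \<union> {Zar A - Bset A F | F. finite F}"

lemma sharp_SB: "sharp_top A = topology_generated_by (SB A)"
  unfolding sharp_top_def SB_def ..

lemma gen_ultra:
  assumes Y: "Y \<subseteq> Zar A" and u: "ultrafilter_on Y U"
    and g: "generate_topology_on (SB A) W"
  shows "A_ultra A U Y \<in> W \<Longrightarrow> W \<inter> Y \<in> U"
  using g
proof (induction rule: generate_topology_on.induct)
  case Empty
  then show ?case by simp
next
  case (Int a b)
  have f: "filter_on Y U" using u unfolding ultrafilter_on_def by blast
  have "a \<inter> Y \<in> U" "b \<inter> Y \<in> U" using Int by blast+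
  then have "(a \<inter> Y) \<inter> (b \<inter> Y) \<in> U" by (rule filter_Int[OF f])
  moreover have "(a \<inter> Y) \<inter> (b \<inter> Y) = a \<inter> b \<inter> Y" by blast
  ultimately show ?case by simp
next
  case (UN K)
  have f: "filter_on Y U" using u unfolding ultrafilter_on_def by blast
  obtain k where k: "k \<in> K" "A_ultra A U Y \<in> k" using UN.prems by blast
  then have "k \<inter> Y \<in> U" using UN.IH by blast
  moreover have "k \<inter> Y \<subseteq> \<Union>K \<inter> Y" using k by blast
  ultimately show ?case using filter_sup[OF f] by blast
next
  case (Basis s)
  then consider F where "finite F" "s = Bset A F" | F where "finite F" "s = Zar A - Bset A F"
    unfolding SB_def by blast
  then show ?case
  proof cases
    case 1
    then have "F \<subseteq> A_ultra A U Y" using Basis.prems unfolding Bset_def by blast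
    then show ?thesis using A_ultra_B[OF Y u \<open>finite F\<close>] 1 by simp
  next
    case 2
    then have "\<not> F \<subseteq> A_ultra A U Y" using Basis.prems unfolding Bset_def by blast
    then show ?thesis using A_ultra_nB[OF Y u] 2 by simp
  qed
qed


lemma UN_SB: "\<Union>(SB A) = Zar A"
proof
  show "\<Union>(SB A) \<subseteq> Zar A" unfolding SB_def using Bset_sub by blast
  have "Zar A \<in> SB A" unfolding SB_def using Bset_empty[of A] by blast
  then show "Zar A \<subseteq> \<Union>(SB A)" by blast
qed

lemma topspace_sharp: "topspace (sharp_top A) = Zar A"
  unfolding sharp_SB topology_generated_by_topspace UN_SB ..

lemma stable_compact:
  assumes st: "stable_ultra A Y"
  shows "compactin (sharp_top A) Y"
  unfolding compactin_def
proof (intro conjI allI impI)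
  have Y: "Y \<subseteq> Zar A" using st unfolding stable_ultra_def by blast
  then show "Y \<subseteq> topspace (sharp_top A)" unfolding topspace_sharp .
  fix \<U> assume a: "(\<forall>U\<in>\<U>. openin (sharp_top A) U) \<and> Y \<subseteq> \<Union>\<U>"
  show "\<exists>\<F>. finite \<F> \<and> \<F> \<subseteq> \<U> \<and> Y \<subseteq> \<Union>\<F>"
  proof (rule ccontr)
    assume n: "\<not> (\<exists>\<F>. finite \<F> \<and> \<F> \<subseteq> \<U> \<and> Y \<subseteq> \<Union>\<F>)"
    define \<FF> where "\<FF> = {T. T \<subseteq> Y \<and> (\<exists>\<F>. finite \<F> \<and> \<F> \<subseteq> \<U> \<and> Y - \<Union>\<F> \<subseteq> T)}"
    have fF: "filter_on Y \<FF>"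
      unfolding filter_on_def
    proof (intro conjI ballI allI impI)
      have "Y \<in> \<FF>" unfolding \<FF>_def by (intro CollectI conjI exI[of _ "{}"]) auto
      then show "\<FF> \<noteq> {}" by blast
      show "S \<subseteq> Y" if "S \<in> \<FF>" for S using that unfolding \<FF>_def by blast
      show "{} \<notin> \<FF>"
      proof
        assume "{} \<in> \<FF>"
        then obtain \<F> where F0: "finite \<F>" "\<F> \<subseteq> \<U>" "Y - \<Union>\<F> \<subseteq> {}" unfolding \<FF>_def by blast
        then have "Y \<subseteq> \<Union>\<F>" by blast
        then show False using n F0(1,2) by blast
      qed
      show "S \<inter> T \<in> \<FF>" if st2: "S \<in> \<FF>" "T \<in> \<FF>" for S T
      proof -
        have s1: "S \<subseteq> Y \<and> (\<exists>\<F>. finite \<F> \<and> \<F> \<subseteq> \<U> \<and> Y - \<Union>\<F> \<subseteq> S)" using st2(1) unfolding \<FF>_def by simp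
        have s2: "T \<subseteq> Y \<and> (\<exists>\<F>. finite \<F> \<and> \<F> \<subseteq> \<U> \<and> Y - \<Union>\<F> \<subseteq> T)" using st2(2) unfolding \<FF>_def by simp
        obtain F1 where F1: "finite F1" "F1 \<subseteq> \<U>" "Y - \<Union>F1 \<subseteq> S" using s1 by blast
        obtain F2 where F2: "finite F2" "F2 \<subseteq> \<U>" "Y - \<Union>F2 \<subseteq> T" using s2 by blast
        have "finite (F1 \<union> F2)" "F1 \<union> F2 \<subseteq> \<U>" "Y - \<Union>(F1 \<union> F2) \<subseteq> S \<inter> T"
          using F1 F2 by auto
        moreover have "S \<inter> T \<subseteq> Y" using s1 by blast
        ultimately show ?thesis unfolding \<FF>_def by (intro CollectI conjI exI[of _ "F1 \<union> F2"]) auto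
      qed
      show "T \<in> \<FF>" if st2: "S \<in> \<FF>" "S \<subseteq> T \<and> T \<subseteq> Y" for S T
      proof -
        have s1: "S \<subseteq> Y \<and> (\<exists>\<F>. finite \<F> \<and> \<F> \<subseteq> \<U> \<and> Y - \<Union>\<F> \<subseteq> S)" using st2(1) unfolding \<FF>_def by simp
        obtain F1 where F1: "finite F1" "F1 \<subseteq> \<U>" "Y - \<Union>F1 \<subseteq> S" using s1 by blast
        have "Y - \<Union>F1 \<subseteq> T" using F1(3) st2(2) by blast
        then show ?thesis unfolding \<FF>_def using F1(1,2) st2(2) by (intro CollectI conjI exI[of _ F1]) auto
      qed
    qed
    obtain U where u: "ultrafilter_on Y U" and FU: "\<FF> \<subseteq> U" using ultra_exists[OF fF] by blast
    have f: "filter_on Y U" using u unfolding ultrafilter_on_def by blast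
    have "A_ultra A U Y \<in> Y" using st u unfolding stable_ultra_def by blast
    then obtain O' where O': "O' \<in> \<U>" "A_ultra A U Y \<in> O'" using a by blast
    have "generate_topology_on (SB A) O'"
      using a O'(1) unfolding sharp_SB openin_topology_generated_by_iff by blast
    then have i1: "O' \<inter> Y \<in> U" using gen_ultra[OF Y u] O'(2) by blast
    have "Y - O' \<in> \<FF>" unfolding \<FF>_def
    proof (intro CollectI conjI exI)
      show "Y - O' \<subseteq> Y" by blast
      show "finite {O'}" "{O'} \<subseteq> \<U>" "Y - \<Union>{O'} \<subseteq> Y - O'" using O' by auto
    qed
    then have i2: "Y - O' \<in> U" using FU by blast
    have "(O' \<inter> Y) \<inter> (Y - O') \<in> U" by (rule filter_Int[OF f i1 i2])
    moreover have "(O' \<inter> Y) \<inter> (Y - O') = {}" by blast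
    ultimately show False using filter_ne[OF f] by simp
  qed
qed


lemma gen_le:
  assumes S: "\<And>s. s \<in> S \<Longrightarrow> openin T s" and W: "openin (topology_generated_by S) W"
  shows "openin T W"
proof -
  have "generate_topology_on S W" using W by (simp add: openin_topology_generated_by_iff)
  then show ?thesis
  proof (induction rule: generate_topology_on.induct)
    case Empty then show ?case by simp
  next
    case (Int a b) then show ?case by (simp add: openin_Int)
  next
    case (UN K) then show ?case by (simp add: openin_Union)
  next
    case (Basis s) then show ?case by (rule S)
  qed
qed

lemma top_eqI:
  assumes "\<And>W. openin X W \<Longrightarrow> openin Y W" "\<And>W. openin Y W \<Longrightarrow> openin X W"
  shows "X = Y"
  using assms topology_eq by blast

lemma hausdorff_sharp: "Hausdorff_space (sharp_top A)"
  unfolding Hausdorff_space_def topspace_sharp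
proof (intro allI impI)
  fix V W :: "'a set" assume a: "V \<in> Zar A \<and> W \<in> Zar A \<and> V \<noteq> W"
  have oB: "openin (sharp_top A) (Bset A {x})" for x
    unfolding sharp_SB by (rule topology_generated_by_Basis) (auto simp: SB_def)
  have oC: "openin (sharp_top A) (Zar A - Bset A {x})" for x
    unfolding sharp_SB by (rule topology_generated_by_Basis) (auto simp: SB_def)
  have d: "disjnt (Bset A {x}) (Zar A - Bset A {x})" for x unfolding disjnt_def by blast
  show "\<exists>U V'. openin (sharp_top A) U \<and> openin (sharp_top A) V' \<and> V \<in> U \<and> W \<in> V' \<and> disjnt U V'"
  proof (cases "V \<subseteq> W")
    case True
    then obtain x where x: "x \<in> W" "x \<notin> V" using a by blast
    show ?thesis
      by (rule exI[of _ "Zar A - Bset A {x}"], rule exI[of _ "Bset A {x}"])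
         (use a x oB oC d in \<open>auto simp: Bset_single disjnt_sym\<close>)
  next
    case False
    then obtain x where x: "x \<in> V" "x \<notin> W" by blast
    show ?thesis
      by (rule exI[of _ "Bset A {x}"], rule exI[of _ "Zar A - Bset A {x}"])
         (use a x oB oC d in \<open>auto simp: Bset_single\<close>)
  qed
qed

lemma closed_stable: "stable_ultra A Y \<Longrightarrow> closedin (sharp_top A) Y"
  by (rule compactin_imp_closedin[OF hausdorff_sharp stable_compact])

lemma open_B: "finite F \<Longrightarrow> openin (sharp_top A) (Bset A F)"
  unfolding sharp_SB by (rule topology_generated_by_Basis) (auto simp: SB_def)

lemma open_cB: "finite F \<Longrightarrow> openin (sharp_top A) (Zar A - Bset A F)"
  unfolding sharp_SB by (rule topology_generated_by_Basis) (auto simp: SB_def)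

lemma closed_B: "closedin (sharp_top A) (Bset A S)"
  by (rule closed_stable[OF stable_B])

lemma ultra_eq: "ultra_top A = sharp_top A"
proof (rule top_eqI)
  fix W assume "openin (ultra_top A) W"
  then show "openin (sharp_top A) W" unfolding ultra_top_def
  proof (rule gen_le[rotated])
    fix s assume "s \<in> {Zar A - Y |Y. stable_ultra A Y}"
    then obtain Y where Y: "s = Zar A - Y" "stable_ultra A Y" by blast
    have "openin (sharp_top A) (topspace (sharp_top A) - Y)"
      using closed_stable[OF Y(2)] by (simp add: closedin_def)
    then show "openin (sharp_top A) s" using Y(1) by (simp add: topspace_sharp)
  qed
next
  fix W assume "openin (sharp_top A) W"
  then show "openin (ultra_top A) W" unfolding sharp_SB
  proof (rule gen_le[rotated])
    fix s assume "s \<in> SB A"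
    then consider F where "finite F" "s = Bset A F" | F where "finite F" "s = Zar A - Bset A F"
      unfolding SB_def by blast
    then show "openin (ultra_top A) s"
    proof cases
      case 1
      have "s = Zar A - (Zar A - Bset A F)" using 1 Bset_sub by blast
      then show ?thesis unfolding ultra_top_def
        by (intro topology_generated_by_Basis) (use stable_cB[OF 1(1)] in blast)
    next
      case 2
      then show ?thesis unfolding ultra_top_def
        by (intro topology_generated_by_Basis) (use stable_B in blast)
    qed
  qed
qed

lemma topspace_zar: "topspace (zariski_top A) = Zar A"
proof -
  have "\<Union>{Bset A F | F. finite F} = Zar A"
    using Bset_sub[of A] Bset_empty[of A] by blast
  then show ?thesis unfolding zariski_top_def by simp
qed

lemma zar_le_sharp:
  assumes "openin (zariski_top A) W" shows "openin (sharp_top A) W"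
proof (rule gen_le[where S="{Bset A F | F. finite F}"])
  show "openin (topology_generated_by {Bset A F |F. finite F}) W" using assms unfolding zariski_top_def .
  fix s assume "s \<in> {Bset A F |F. finite F}"
  then show "openin (sharp_top A) s" using open_B by blast
qed

lemma zar_union:
  assumes "generate_topology_on {Bset A F | F. finite F} W"
  shows "V \<in> W \<Longrightarrow> \<exists>F. finite F \<and> V \<in> Bset A F \<and> Bset A F \<subseteq> W"
  using assms
proof (induction arbitrary: V rule: generate_topology_on.induct)
  case Empty then show ?case by simp
next
  case (Int a b)
  obtain F1 where F1: "finite F1" "V \<in> Bset A F1" "Bset A F1 \<subseteq> a" using Int by blast
  obtain F2 where F2: "finite F2" "V \<in> Bset A F2" "Bset A F2 \<subseteq> b" using Int by blast
  have "Bset A (F1 \<union> F2) = Bset A F1 \<inter> Bset A F2" unfolding Bset_def by blast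
  then show ?case using F1 F2 by (intro exI[of _ "F1 \<union> F2"]) auto
next
  case (UN K)
  then obtain k where k: "k \<in> K" "V \<in> k" by blast
  then obtain F where F: "finite F" "V \<in> Bset A F" "Bset A F \<subseteq> k" using UN.IH by blast
  have "Bset A F \<subseteq> \<Union>K" using F(3) k(1) by blast
  then show ?case using F(1,2) by blast
next
  case (Basis s)
  then obtain F where F: "finite F" "s = Bset A F" by blast
  then show ?case using Basis.prems by (intro exI[of _ F]) simp
qed

lemma compactin_coarser:
  assumes c: "compactin T S" and o: "\<And>W. openin X W \<Longrightarrow> openin T W"
    and t: "topspace X = topspace T"
  shows "compactin X S"
  unfolding compactin_def
proof (intro conjI allI impI)
  show "S \<subseteq> topspace X" using c t by (simp add: compactin_subset_topspace)
  fix \<U> assume a: "(\<forall>U\<in>\<U>. openin X U) \<and> S \<subseteq> \<Union>\<U>"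
  then have a2: "(\<forall>U\<in>\<U>. openin T U) \<and> S \<subseteq> \<Union>\<U>" using o by blast
  have cc: "\<forall>\<U>. (\<forall>U\<in>\<U>. openin T U) \<and> S \<subseteq> \<Union>\<U> \<longrightarrow> (\<exists>\<F>. finite \<F> \<and> \<F> \<subseteq> \<U> \<and> S \<subseteq> \<Union>\<F>)"
    using c unfolding compactin_def by (rule conjunct2)
  show "\<exists>\<F>. finite \<F> \<and> \<F> \<subseteq> \<U> \<and> S \<subseteq> \<Union>\<F>" using cc a2 by simp
qed

lemma B_zar_open: "finite F \<Longrightarrow> openin (zariski_top A) (Bset A F)"
  unfolding zariski_top_def by (rule topology_generated_by_Basis) blast

lemma B_zar_compact: "compactin (zariski_top A) (Bset A F)"
proof -
  have c: "compactin (sharp_top A) (Bset A F)" by (rule stable_compact[OF stable_B])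
  have t: "topspace (zariski_top A) = topspace (sharp_top A)"
    unfolding topspace_zar topspace_sharp ..
  show ?thesis by (rule compactin_coarser[OF c zar_le_sharp t])
qed

lemma compact_open_closed:
  assumes o: "openin (zariski_top A) U" and c: "compactin (zariski_top A) U"
  shows "closedin (sharp_top A) U"
proof -
  define \<U> where "\<U> = {Bset A F | F. finite F \<and> Bset A F \<subseteq> U}"
  have g: "generate_topology_on {Bset A F | F. finite F} U"
    using o unfolding zariski_top_def openin_topology_generated_by_iff .
  have "U \<subseteq> \<Union>\<U>"
  proof
    fix V assume "V \<in> U"
    then obtain F where F: "finite F" "V \<in> Bset A F" "Bset A F \<subseteq> U" using zar_union[OF g] by blast
    then have "Bset A F \<in> \<U>" unfolding \<U>_def by blast
    then show "V \<in> \<Union>\<U>" using F(2) by blast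
  qed
  moreover have "\<forall>B\<in>\<U>. openin (zariski_top A) B" unfolding \<U>_def using B_zar_open by blast
  ultimately obtain \<F> where F: "finite \<F>" "\<F> \<subseteq> \<U>" "U \<subseteq> \<Union>\<F>"
    using c unfolding compactin_def by blast
  have "\<Union>\<F> \<subseteq> U" using F(2) unfolding \<U>_def by blast
  then have eq: "U = \<Union>\<F>" using F(3) by blast
  have "closedin (sharp_top A) (\<Union>\<F>)"
  proof (rule closedin_Union[OF F(1)])
    fix T assume "T \<in> \<F>"
    then obtain G where "T = Bset A G" using F(2) unfolding \<U>_def by blast
    then show "closedin (sharp_top A) T" using closed_B by simp
  qed
  then show ?thesis using eq by simp
qed


lemma part5:
  "sharp_top A = topology_generated_by
           ({Zar A - C | C. closedin (zariski_top A) C} \<union>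
            {Zar A - U | U. openin (zariski_top A) U \<and> compactin (zariski_top A) U})"
proof (rule top_eqI)
  fix W assume "openin (sharp_top A) W"
  then show "openin (topology_generated_by
           ({Zar A - C | C. closedin (zariski_top A) C} \<union>
            {Zar A - U | U. openin (zariski_top A) U \<and> compactin (zariski_top A) U})) W"
    unfolding sharp_SB
  proof (rule gen_le[rotated])
    fix s assume "s \<in> SB A"
    then consider F where "finite F" "s = Bset A F" | F where "finite F" "s = Zar A - Bset A F"
      unfolding SB_def by blast
    then show "openin (topology_generated_by
           ({Zar A - C | C. closedin (zariski_top A) C} \<union>
            {Zar A - U | U. openin (zariski_top A) U \<and> compactin (zariski_top A) U})) s"
    proof cases
      case 1
      have c: "closedin (zariski_top A) (Zar A - Bset A F)"
        unfolding closedin_def topspace_zar using B_zar_open[OF 1(1)] Bset_sub[of A F]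
        by (simp add: Diff_Diff_Int inf_absorb2)
      have "s = Zar A - (Zar A - Bset A F)" using 1 Bset_sub by blast
      then show ?thesis using c by (intro topology_generated_by_Basis) blast
    next
      case 2
      then show ?thesis using B_zar_open[OF 2(1)] B_zar_compact
        by (intro topology_generated_by_Basis) blast
    qed
  qed
next
  fix W assume "openin (topology_generated_by
           ({Zar A - C | C. closedin (zariski_top A) C} \<union>
            {Zar A - U | U. openin (zariski_top A) U \<and> compactin (zariski_top A) U})) W"
  then show "openin (sharp_top A) W"
  proof (rule gen_le[rotated])
    fix s assume "s \<in> {Zar A - C | C. closedin (zariski_top A) C} \<union>
            {Zar A - U | U. openin (zariski_top A) U \<and> compactin (zariski_top A) U}"
    then consider C where "closedin (zariski_top A) C" "s = Zar A - C"
      | U where "openin (zariski_top A) U" "compactin (zariski_top A) U" "s = Zar A - U" by blast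
    then show "openin (sharp_top A) s"
    proof cases
      case 1
      then have "openin (zariski_top A) s" unfolding closedin_def topspace_zar by simp
      then show ?thesis by (rule zar_le_sharp)
    next
      case 2
      have "closedin (sharp_top A) U" by (rule compact_open_closed[OF 2(1,2)])
      then show ?thesis using 2(3) unfolding closedin_def topspace_sharp by simp
    qed
  qed
qed

lemma part6:
  "sharp_top A = topology_generated_by
           ((\<lambda>C. Zar A - C) `
             ({Bset A F | F. finite F} \<union>
              {Zar A \<inter> (\<Inter>G\<in>\<G>. Zar A - Bset A G) | \<G>. \<forall>G\<in>\<G>. finite G}))"
proof (rule top_eqI)
  fix W assume "openin (sharp_top A) W"
  then show "openin (topology_generated_by
           ((\<lambda>C. Zar A - C) `
             ({Bset A F | F. finite F} \<union>
              {Zar A \<inter> (\<Inter>G\<in>\<G>. Zar A - Bset A G) | \<G>. \<forall>G\<in>\<G>. finite G}))) W"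
    unfolding sharp_SB
  proof (rule gen_le[rotated])
    fix s assume "s \<in> SB A"
    then consider F where "finite F" "s = Bset A F" | F where "finite F" "s = Zar A - Bset A F"
      unfolding SB_def by blast
    then show "openin (topology_generated_by
           ((\<lambda>C. Zar A - C) `
             ({Bset A F | F. finite F} \<union>
              {Zar A \<inter> (\<Inter>G\<in>\<G>. Zar A - Bset A G) | \<G>. \<forall>G\<in>\<G>. finite G}))) s"
    proof cases
      case 1
      have m: "Zar A \<inter> (\<Inter>G\<in>{F}. Zar A - Bset A G) \<in> {Zar A \<inter> (\<Inter>G\<in>\<G>. Zar A - Bset A G) | \<G>. \<forall>G\<in>\<G>. finite G}"
        using 1(1) by blast
      have "s = Zar A - (Zar A \<inter> (\<Inter>G\<in>{F}. Zar A - Bset A G))" using 1(2) Bset_sub by blast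
      then show ?thesis using m by (intro topology_generated_by_Basis) blast
    next
      case 2
      then show ?thesis by (intro topology_generated_by_Basis) blast
    qed
  qed
next
  fix W assume "openin (topology_generated_by
           ((\<lambda>C. Zar A - C) `
             ({Bset A F | F. finite F} \<union>
              {Zar A \<inter> (\<Inter>G\<in>\<G>. Zar A - Bset A G) | \<G>. \<forall>G\<in>\<G>. finite G}))) W"
  then show "openin (sharp_top A) W"
  proof (rule gen_le[rotated])
    fix s assume "s \<in> (\<lambda>C. Zar A - C) `
             ({Bset A F | F. finite F} \<union>
              {Zar A \<inter> (\<Inter>G\<in>\<G>. Zar A - Bset A G) | \<G>. \<forall>G\<in>\<G>. finite G})"
    then consider F where "finite F" "s = Zar A - Bset A F"
      | \<G> where "\<forall>G\<in>\<G>. finite G" "s = Zar A - (Zar A \<inter> (\<Inter>G\<in>\<G>. Zar A - Bset A G))"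
      by blast
    then show "openin (sharp_top A) s"
    proof cases
      case 1
      then show ?thesis using open_cB by simp
    next
      case 2
      have "s = \<Union>((\<lambda>G. Bset A G) ` \<G>)" using 2(2) Bset_sub by blast
      moreover have "openin (sharp_top A) (\<Union>((\<lambda>G. Bset A G) ` \<G>))"
        using 2(1) open_B by (intro openin_Union) blast
      ultimately show ?thesis by simp
    qed
  qed
qed

lemma part8:
  "sharp_top A = constructible_top (zariski_top A)"
  unfolding constructible_top_def topspace_zar
proof (rule top_eqI)
  fix W assume "openin (sharp_top A) W"
  then show "openin (topology_generated_by
     ({U. openin (zariski_top A) U \<and> compactin (zariski_top A) U} \<union>
      {Zar A - U | U. openin (zariski_top A) U \<and> compactin (zariski_top A) U})) W"
    unfolding sharp_SB
  proof (rule gen_le[rotated])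
    fix s assume "s \<in> SB A"
    then consider F where "finite F" "s = Bset A F" | F where "finite F" "s = Zar A - Bset A F"
      unfolding SB_def by blast
    then show "openin (topology_generated_by
     ({U. openin (zariski_top A) U \<and> compactin (zariski_top A) U} \<union>
      {Zar A - U | U. openin (zariski_top A) U \<and> compactin (zariski_top A) U})) s"
    proof cases
      case 1
      then show ?thesis using B_zar_open[OF 1(1)] B_zar_compact
        by (intro topology_generated_by_Basis) blast
    next
      case 2
      then show ?thesis using B_zar_open[OF 2(1)] B_zar_compact
        by (intro topology_generated_by_Basis) blast
    qed
  qed
next
  fix W assume "openin (topology_generated_by
     ({U. openin (zariski_top A) U \<and> compactin (zariski_top A) U} \<union>
      {Zar A - U | U. openin (zariski_top A) U \<and> compactin (zariski_top A) U})) W"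
  then show "openin (sharp_top A) W"
  proof (rule gen_le[rotated])
    fix s assume "s \<in> {U. openin (zariski_top A) U \<and> compactin (zariski_top A) U} \<union>
      {Zar A - U | U. openin (zariski_top A) U \<and> compactin (zariski_top A) U}"
    then consider "openin (zariski_top A) s"
      | U where "openin (zariski_top A) U" "compactin (zariski_top A) U" "s = Zar A - U" by blast
    then show "openin (sharp_top A) s"
    proof cases
      case 1
      then show ?thesis by (rule zar_le_sharp)
    next
      case 2
      have "closedin (sharp_top A) U" by (rule compact_open_closed[OF 2(1,2)])
      then show ?thesis using 2(3) unfolding closedin_def topspace_sharp by simp
    qed
  qed
qed

theorem theorem3p4:
  fixes A :: "'a::field set"
  assumes "is_subring A"
  shows
    "((\<forall>U. openin (zariski_top A) U \<longrightarrow> openin (ultra_top A) U) \<and>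
     (\<forall>S. closedin (ultra_top A) (Bset A S)) \<and>
     (\<forall>F. finite F \<longrightarrow> openin (ultra_top A) (Bset A F) \<and> closedin (ultra_top A) (Bset A F)) \<and>
     (Hausdorff_space (sharp_top A)) \<and>
     (sharp_top A = topology_generated_by
           ({Zar A - C | C. closedin (zariski_top A) C} \<union>
            {Zar A - U | U. openin (zariski_top A) U \<and> compactin (zariski_top A) U})) \<and>
     (sharp_top A = topology_generated_by
           ((\<lambda>C. Zar A - C) `
             ({Bset A F | F. finite F} \<union>
              {Zar A \<inter> (\<Inter>G\<in>\<G>. Zar A - Bset A G) | \<G>. \<forall>G\<in>\<G>. finite G}))) \<and>
     (Hausdorff_space (ultra_top A) \<and> compact_space (ultra_top A)) \<and>
     (ultra_top A = sharp_top A \<and> sharp_top A = constructible_top (zariski_top A)))"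
proof -
  have u: "ultra_top A = sharp_top A" by (rule ultra_eq)
  have p1: "\<forall>U. openin (zariski_top A) U \<longrightarrow> openin (ultra_top A) U"
    unfolding u using zar_le_sharp by blast
  have p2: "\<forall>S. closedin (ultra_top A) (Bset A S)"
    unfolding u using closed_B by blast
  have p3: "\<forall>F. finite F \<longrightarrow> openin (ultra_top A) (Bset A F) \<and> closedin (ultra_top A) (Bset A F)"
    unfolding u using open_B closed_B by blast
  have p7: "compact_space (sharp_top A)"
    unfolding compact_space_def topspace_sharp
    using stable_compact[OF stable_B[of A "{}"]] by (simp add: Bset_empty)
  show ?thesis
  proof (intro conjI)
    show "\<forall>U. openin (zariski_top A) U \<longrightarrow> openin (ultra_top A) U" by (rule p1)
    show "\<forall>S. closedin (ultra_top A) (Bset A S)" by (rule p2)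
    show "\<forall>F. finite F \<longrightarrow> openin (ultra_top A) (Bset A F) \<and> closedin (ultra_top A) (Bset A F)" by (rule p3)
    show "Hausdorff_space (sharp_top A)" by (rule hausdorff_sharp)
    show "Hausdorff_space (ultra_top A)" unfolding u by (rule hausdorff_sharp)
    show "compact_space (ultra_top A)" unfolding u by (rule p7)
    show "ultra_top A = sharp_top A" by (rule u)
  qed (rule part5, rule part6, rule part8)
qed

end
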